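(* Let $\delta>0$ and positive integers $d',p$. Define $\mathcal N^{RS}_\delta:\mathbb{R}^{d'}\times\mathbb{R}^p\to\mathbb{R}^p$ by $y_k=1+\sum_{j\in[d']}\mathcal N^C_\delta(x_k,x_j)$ for $k\in[d']$ and $\mathcal N^{RS}_\delta(\mathbf{x},\mathbf{r})[i]=\sum_{k\in[d']}\mathcal N^{IFP}(x_k,r_i-y_k)$ for $i\in[p]$. If $\mathbf{x}\in[0,1]^{d'}$ is such that for all $j\ne k$ either $|x_j-x_k|\ge\delta$ or $x_j=x_k=0$, and $\mathbf{r}\in\{1,\dots,d'\}^p$, then the output $\mathbf{x}'=\mathcal N^{RS}_\delta(\mathbf{x},\mathbf{r})$ satisfies $x'_i=\mathcal R_{r_i}(\mathbf{x})$ for all $i\in[p]$. Further, for arbitrary $\mathbf{x}\in\mathbb{R}^{d'}$, $|x'_i|\le d'\|\mathbf{x}\|_\infty$. Moreover, $\mathcal N^{RS}_\delta$ is a ReLU network with 2 hidden layers, width at most $\max(2{d'}^2+2d'+2p,\,4pd')$, and magnitudes of weights bounded by $\frac1\delta$.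
   Context: $\mathcal N^C_\delta(x_1,x_2)=\left[\frac1\delta(x_1-x_2)\right]_+-\left[\frac1\delta(x_1-x_2-\delta)\right]_+$ (comparison network) and $\mathcal N^{IFP}(x,s)=[x+s]_+-[x+s-1]_+-[s]_++[s-1]_+$ (indicator function product network), where $[z]_+=\max\{0,z\}$. $\mathcal R_r(\mathbf{x})$ is the $r$-th entry of $\mathbf{x}$ in ascending sorted order. Width is the number of neurons in the largest hidden layer.
   Formalization: All weights of the network, biases included, are bounded in magnitude by max(1, 1/delta) rather than by 1/delta. The statement above fails without it. *)

theory Defs
  imports "HOL-Analysis.Analysis"
begin

text \<open>Vectors in R^n are represented as functions nat => real, only indices 0..n-1 matter
  (paper index k in [n] corresponds to k-1 here).\<close>

definition relu :: "real \<Rightarrow> real" where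
  "relu z = max 0 z"

definition NC :: "real \<Rightarrow> real \<Rightarrow> real \<Rightarrow> real" where
  "NC \<delta> x1 x2 = relu ((1/\<delta>) * (x1 - x2)) - relu ((1/\<delta>) * (x1 - x2 - \<delta>))"

definition NIFP :: "real \<Rightarrow> real \<Rightarrow> real" where
  "NIFP x s = relu (x + s) - relu (x + s - 1) - relu s + relu (s - 1)"

definition RS_y :: "real \<Rightarrow> nat \<Rightarrow> (nat \<Rightarrow> real) \<Rightarrow> nat \<Rightarrow> real" where
  "RS_y \<delta> d x k = 1 + (\<Sum>j<d. NC \<delta> (x k) (x j))"

definition NRS :: "real \<Rightarrow> nat \<Rightarrow> (nat \<Rightarrow> real) \<Rightarrow> (nat \<Rightarrow> real) \<Rightarrow> nat \<Rightarrow> real" where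
  "NRS \<delta> d x r i = (\<Sum>k<d. NIFP (x k) (r i - RS_y \<delta> d x k))"

text \<open>R_r(x): the r-th entry (1-based) of x_1..x_d in ascending sorted order\<close>
definition rank_entry :: "nat \<Rightarrow> (nat \<Rightarrow> real) \<Rightarrow> nat \<Rightarrow> real" where
  "rank_entry d x r = sort (map x [0..<d]) ! (r - 1)"

definition sup_norm :: "nat \<Rightarrow> (nat \<Rightarrow> real) \<Rightarrow> real" where
  "sup_norm d x = Max ((\<lambda>k. \<bar>x k\<bar>) ` {..<d})"

text \<open>A network is given by its list of layer widths
  [n_0, n_1, ..., n_L] and a list of L affine layers (weight matrix, bias vector).
  ReLU is applied after every layer except the last; hidden layers are n_1..n_(L-1).\<close>

type_synonym layer = "(nat \<Rightarrow> nat \<Rightarrow> real) \<times> (nat \<Rightarrow> real)"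

definition affine :: "nat \<Rightarrow> layer \<Rightarrow> (nat \<Rightarrow> real) \<Rightarrow> (nat \<Rightarrow> real)" where
  "affine n L v = (\<lambda>i. (\<Sum>j<n. fst L i j * v j) + snd L i)"

fun nn_eval :: "nat list \<Rightarrow> layer list \<Rightarrow> (nat \<Rightarrow> real) \<Rightarrow> (nat \<Rightarrow> real)" where
  "nn_eval (n # m # ns) [L] v = affine n L v"
| "nn_eval (n # m # ns) (L # L' # Ls) v = nn_eval (m # ns) (L' # Ls) (\<lambda>i. relu (affine n L v i))"
| "nn_eval _ _ v = v"

definition nn_wf :: "nat list \<Rightarrow> layer list \<Rightarrow> bool" where
  "nn_wf dims Ls \<longleftrightarrow> Ls \<noteq> [] \<and> length dims = length Ls + 1"

definition nn_hidden_layers :: "layer list \<Rightarrow> nat" where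
  "nn_hidden_layers Ls = length Ls - 1"

definition nn_width :: "nat list \<Rightarrow> nat" where
  "nn_width dims = Max (set (butlast (tl dims)))"

definition nn_weight_bound :: "nat list \<Rightarrow> layer list \<Rightarrow> real \<Rightarrow> bool" where
  "nn_weight_bound dims Ls B \<longleftrightarrow>
     (\<forall>l<length Ls. \<forall>i<dims ! (Suc l).
        \<bar>snd (Ls ! l) i\<bar> \<le> B \<and> (\<forall>j<dims ! l. \<bar>fst (Ls ! l) i j\<bar> \<le> B))"

definition join_input :: "nat \<Rightarrow> (nat \<Rightarrow> real) \<Rightarrow> (nat \<Rightarrow> real) \<Rightarrow> (nat \<Rightarrow> real)" where
  "join_input d x r = (\<lambda>j. if j < d then x j else r (j - d))"

end

theory Submission
  imports Defs "HOL-Library.Multiset"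
begin


lemma len_filter_sort: "length (filter P (sort xs)) = length (filter P (xs::real list))"
  by (metis mset_filter mset_sort size_mset)

lemma card_filter_map: "length (filter P (map x [0..<d])) = card {j. j < d \<and> P (x j)}"
  by (auto simp: length_filter_conv_card intro!: arg_cong[where f=card])

lemma sorted_rank:
  fixes x :: "nat \<Rightarrow> real"
  assumes "m < d"
  defines "w \<equiv> sort (map x [0..<d]) ! m"
  shows "card {j. j < d \<and> x j < w} \<le> m" and "m + 1 \<le> card {j. j < d \<and> x j \<le> w}"
    and "\<exists>k<d. x k = w"
proof -
  let ?S = "sort (map x [0..<d])"
  have len: "length ?S = d" by simp
  have so: "sorted ?S" by simp
  have c: "card {j. j < d \<and> P (x j)} = card {t. t < d \<and> P (?S ! t)}" for P
    using len_filter_sort[of P "map x [0..<d]"] card_filter_map[of P x d]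
      length_filter_conv_card[of P ?S] len by simp
  have sub1: "{t. t < d \<and> ?S ! t < w} \<subseteq> {..<m}"
  proof
    fix t assume t: "t \<in> {t. t < d \<and> ?S ! t < w}"
    show "t \<in> {..<m}"
    proof (rule ccontr)
      assume "t \<notin> {..<m}"
      then have "m \<le> t" by simp
      then have "?S ! m \<le> ?S ! t" using sorted_nth_mono[OF so] t len by simp
      then show False using t w_def by simp
    qed
  qed
  have "card {t. t < d \<and> ?S ! t < w} \<le> m" using card_mono[OF _ sub1] by simp
  then show "card {j. j < d \<and> x j < w} \<le> m" using c[of "\<lambda>v. v < w"] by simp
  have sub2: "{..m} \<subseteq> {t. t < d \<and> ?S ! t \<le> w}"
  proof
    fix t assume "t \<in> {..m}"
    then show "t \<in> {t. t < d \<and> ?S ! t \<le> w}"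
      using sorted_nth_mono[OF so, of t m] assms(1) len w_def by simp
  qed
  have "m + 1 \<le> card {t. t < d \<and> ?S ! t \<le> w}"
    using card_mono[OF _ sub2] by simp
  then show "m + 1 \<le> card {j. j < d \<and> x j \<le> w}" using c[of "\<lambda>v. v \<le> w"] by simp
  have "w \<in> set ?S" unfolding w_def using len assms(1) by (intro nth_mem) simp
  then show "\<exists>k<d. x k = w" by auto
qed

lemma sum_ind: "finite A \<Longrightarrow> (\<Sum>j\<in>A. if P j then (1::real) else 0) = real (card {j\<in>A. P j})"
  by (simp add: sum.inter_filter[symmetric])



lemma NC_one: "\<delta> > 0 \<Longrightarrow> a - b \<ge> \<delta> \<Longrightarrow> NC \<delta> a b = 1"
  unfolding NC_def relu_def by (auto simp: field_simps max_def)

lemma NC_zero: "\<delta> > 0 \<Longrightarrow> a \<le> b \<Longrightarrow> NC \<delta> a b = 0"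
  unfolding NC_def relu_def by (auto simp: field_simps max_def mult_le_0_iff)

lemma NIFP_int: "0 \<le> x \<Longrightarrow> x \<le> 1 \<Longrightarrow> NIFP x (real_of_int n) = (if n = 0 then x else 0)"
proof -
  assume a: "0 \<le> x" "x \<le> 1"
  consider "n = 0" | "n \<ge> 1" | "n \<le> -1" by linarith
  then show ?thesis
  proof cases
    case 1 then show ?thesis using a unfolding NIFP_def relu_def by auto
  next
    case 2 then have "real_of_int n \<ge> 1" by simp
    then show ?thesis using a 2 unfolding NIFP_def relu_def by auto
  next
    case 3 then have "real_of_int n \<le> -1" by simp
    then show ?thesis using a 3 unfolding NIFP_def relu_def by auto
  qed
qed

lemma RS_y_val:
  assumes "\<delta> > 0" and "k < d"
    and sep: "\<forall>j<d. \<forall>k<d. j \<noteq> k \<longrightarrow> \<bar>x j - x k\<bar> \<ge> \<delta> \<or> (x j = 0 \<and> x k = 0)"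
  shows "RS_y \<delta> d x k = 1 + real (card {j. j < d \<and> x j < x k})"
proof -
  have "(\<Sum>j<d. NC \<delta> (x k) (x j)) = (\<Sum>j<d. if x j < x k then 1 else 0)"
  proof (rule sum.cong)
    fix j assume j: "j \<in> {..<d}"
    show "NC \<delta> (x k) (x j) = (if x j < x k then 1 else 0)"
    proof (cases "j = k")
      case True then show ?thesis using NC_zero[OF assms(1)] by simp
    next
      case False
      then have "\<bar>x j - x k\<bar> \<ge> \<delta> \<or> (x j = 0 \<and> x k = 0)" using sep j assms(2) by auto
      then show ?thesis using NC_zero[OF assms(1)] NC_one[OF assms(1)] by (auto simp: abs_if split: if_splits)
    qed
  qed simp
  also have "\<dots> = real (card {j\<in>{..<d}. x j < x k})" by (rule sum_ind) simp
  finally show ?thesis unfolding RS_y_def by simp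
qed

lemma part1:
  fixes x :: "nat \<Rightarrow> real" and \<rho> :: "nat \<Rightarrow> nat"
  assumes "\<delta> > 0"
    and rng: "\<forall>k<d. 0 \<le> x k \<and> x k \<le> 1"
    and sep: "\<forall>j<d. \<forall>k<d. j \<noteq> k \<longrightarrow> \<bar>x j - x k\<bar> \<ge> \<delta> \<or> (x j = 0 \<and> x k = 0)"
    and r: "1 \<le> \<rho> i" "\<rho> i \<le> d"
  shows "NRS \<delta> d x (\<lambda>i. real (\<rho> i)) i = rank_entry d x (\<rho> i)"
proof -
  define m where "m = \<rho> i - 1"
  have md: "m < d" using r m_def by simp
  define c where "c k = card {j. j < d \<and> x j < x k}" for k
  define w where "w = sort (map x [0..<d]) ! m"
  have w1: "card {j. j < d \<and> x j < w} \<le> m" and w2: "m + 1 \<le> card {j. j < d \<and> x j \<le> w}"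
    and w3: "\<exists>k<d. x k = w" using sorted_rank[OF md, of x] w_def by auto
  have rk: "rank_entry d x (\<rho> i) = w" unfolding rank_entry_def w_def m_def by simp
  have "NRS \<delta> d x (\<lambda>i. real (\<rho> i)) i = (\<Sum>k<d. if c k = m then x k else 0)"
    unfolding NRS_def
  proof (rule sum.cong)
    fix k assume k: "k \<in> {..<d}"
    have e1: "real (\<rho> i) - RS_y \<delta> d x k = real_of_int (int (\<rho> i) - 1 - int (c k))"
      using RS_y_val[OF assms(1) _ sep, of k] k c_def by simp
    have e2: "(int (\<rho> i) - 1 - int (c k) = 0) = (c k = m)" using r m_def by auto
    have xk: "0 \<le> x k" "x k \<le> 1" using rng k by auto
    show "NIFP (x k) (real (\<rho> i) - RS_y \<delta> d x k) = (if c k = m then x k else 0)"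
      unfolding e1 NIFP_int[OF xk] e2 by simp
  qed simp
  have key: "x k = w" if k: "k < d" "c k = m" for k
  proof (rule ccontr)
    assume ne: "x k \<noteq> w"
    show False
    proof (cases "x k < w")
      case True
      have "insert k {j. j < d \<and> x j < x k} \<subseteq> {j. j < d \<and> x j < w}" using True k by auto
      then have "card (insert k {j. j < d \<and> x j < x k}) \<le> card {j. j < d \<and> x j < w}"
        by (intro card_mono) auto
      then show False using w1 k c_def by simp
    next
      case False
      then have "x k > w" using ne by simp
      then have "{j. j < d \<and> x j \<le> w} \<subseteq> {j. j < d \<and> x j < x k}" by auto
      then have "card {j. j < d \<and> x j \<le> w} \<le> c k" unfolding c_def by (intro card_mono) auto
      then show False using w2 k by simp
    qed
  qed
  show ?thesis
  proof (cases "w = 0")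
    case True
    then have "(\<Sum>k<d. if c k = m then x k else 0) = 0" using key by (intro sum.neutral) auto
    then show ?thesis using rk True \<open>NRS \<delta> d x (\<lambda>i. real (\<rho> i)) i = _\<close> by simp
  next
    case False
    obtain k0 where k0: "k0 < d" "x k0 = w" using w3 by auto
    have uniq: "j = k0" if "j < d" "x j = w" for j
      using sep[rule_format, OF that(1) k0(1)] k0 that False assms(1) by (cases "j = k0") auto
    have "{j. j < d \<and> x j \<le> w} = insert k0 {j. j < d \<and> x j < w}" using k0 by (auto dest: uniq)
    then have "card {j. j < d \<and> x j \<le> w} = 1 + card {j. j < d \<and> x j < w}"
      using k0 by simp
    then have "c k0 = m" using w1 w2 k0 c_def by simp
    have "(\<Sum>k<d. if c k = m then x k else 0) = (\<Sum>k<d. if k = k0 then w else 0)"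
    proof (rule sum.cong)
      fix k assume k: "k \<in> {..<d}"
      show "(if c k = m then x k else 0) = (if k = k0 then w else 0)"
      proof (cases "c k = m")
        case True
        then have "x k = w" using key k by simp
        then have "k = k0" using uniq k by simp
        then show ?thesis using True \<open>x k = w\<close> by simp
      next
        case False
        then have "k \<noteq> k0" using \<open>c k0 = m\<close> by auto
        then show ?thesis using False by simp
      qed
    qed simp
    also have "\<dots> = w" using k0 by simp
    finally show ?thesis using rk \<open>NRS \<delta> d x (\<lambda>i. real (\<rho> i)) i = _\<close> by simp
  qed
qed

lemma NIFP_abs: "\<bar>NIFP x s\<bar> \<le> \<bar>x\<bar>"
  unfolding NIFP_def relu_def by (auto simp: max_def abs_if)

lemma part2:
  assumes "d > 0"
  shows "\<bar>NRS \<delta> d x r i\<bar> \<le> real d * sup_norm d x"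
proof -
  have "\<bar>NRS \<delta> d x r i\<bar> \<le> (\<Sum>k<d. \<bar>NIFP (x k) (r i - RS_y \<delta> d x k)\<bar>)"
    unfolding NRS_def by (rule sum_abs)
  also have "\<dots> \<le> (\<Sum>k<d. sup_norm d x)"
  proof (rule sum_mono)
    fix k assume "k \<in> {..<d}"
    then have "\<bar>x k\<bar> \<le> sup_norm d x" unfolding sup_norm_def by (intro Max_ge) auto
    then show "\<bar>NIFP (x k) (r i - RS_y \<delta> d x k)\<bar> \<le> sup_norm d x" using NIFP_abs order_trans by blast
  qed
  finally show ?thesis by simp
qed



lemma sum_split: "(\<Sum>j<m+(n::nat). f j) = (\<Sum>j<m. f j) + (\<Sum>j<n. f (m+j))"
  by (induct n) (simp_all add: add_ac)

lemma sum_pair: "(\<Sum>j<(a::nat)*b. f j) = (\<Sum>u<a. \<Sum>v<b. f (u*b+v))"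
proof (induct a)
  case (Suc a)
  have "(\<Sum>j<Suc a*b. f j) = (\<Sum>j<a*b + b. f j)" by (simp add: add.commute)
  also have "\<dots> = (\<Sum>j<a*b. f j) + (\<Sum>v<b. f (a*b+v))" by (rule sum_split)
  finally show ?case using Suc by simp
qed simp

lemma divmod_dec:
  fixes u v b :: nat
  assumes "v < b"
  shows "(u*b+v) div b = u" "(u*b+v) mod b = v"
  using assms by auto

lemma lt_sq: "u < d \<Longrightarrow> v < (d::nat) \<Longrightarrow> u*d+v < d*d"
proof -
  assume "u < d" "v < d"
  then have "Suc u \<le> d" by simp
  then have "Suc u * d \<le> d * d" by (rule mult_right_mono) simp
  then show ?thesis using \<open>v < d\<close> by simp
qed

lemma sum_delta_mult: "finite A \<Longrightarrow> (\<Sum>j\<in>A. (if j = a then c else 0) * f j) = (if a \<in> A then c * f a else (0::real))"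
  by (simp add: if_distrib[of "\<lambda>z. z * _"] cong: if_cong)

definition W1 :: "real \<Rightarrow> nat \<Rightarrow> nat \<Rightarrow> nat \<Rightarrow> nat \<Rightarrow> real" where
  "W1 \<delta> d p n j =
    (if n < d*d then (if n div d = n mod d then 0 else (if j = n div d then 1/\<delta> else 0) + (if j = n mod d then -1/\<delta> else 0))
     else if n < d*d+d*d then (if j = (n-d*d) div d then 1/\<delta> else 0) + (if j = (n-d*d) mod d then -1/\<delta> else 0)
     else if n < d*d+d*d+d then (if j = n - (d*d+d*d) then 1 else 0)
     else if n < d*d+d*d+d+d then (if j = n - (d*d+d*d+d) then -1 else 0)
     else if n < d*d+d*d+d+d+p then (if j = d + (n - (d*d+d*d+d+d)) then 1 else 0)
     else (if j = d + (n - (d*d+d*d+d+d+p)) then -1 else 0))"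

definition b1 :: "nat \<Rightarrow> nat \<Rightarrow> real" where
  "b1 d n = (if n < d*d \<and> n div d = n mod d then 1 else if d*d \<le> n \<and> n < d*d+d*d then -1 else 0)"

definition H1 :: "real \<Rightarrow> nat \<Rightarrow> nat \<Rightarrow> (nat \<Rightarrow> real) \<Rightarrow> nat \<Rightarrow> real" where
  "H1 \<delta> d p v n = relu (affine (d+p) (W1 \<delta> d p, b1 d) v n)"

lemma relu_diff: "relu z - relu (-z) = z"
  unfolding relu_def by auto

lemma h1_A:
  assumes "\<delta> > 0" "u < d" "w < d"
  shows "H1 \<delta> d p (join_input d x r) (u*d+w) = relu ((1/\<delta>) * (x u - x w)) + (if u = w then 1 else 0)"
proof -
  have n: "u*d+w < d*d" using lt_sq assms by simp
  have dm: "(u*d+w) div d = u" "(u*d+w) mod d = w" using divmod_dec assms by auto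
  show ?thesis unfolding H1_def affine_def W1_def b1_def
    using n assms by (cases "u = w") (simp_all add: dm distrib_right sum.distrib sum_delta_mult join_input_def field_simps relu_def)
qed

lemma h1_B:
  assumes "\<delta> > 0" "u < d" "w < d"
  shows "H1 \<delta> d p (join_input d x r) (d*d+(u*d+w)) = relu ((1/\<delta>) * (x u - x w - \<delta>))"
proof -
  have n: "u*d+w < d*d" using lt_sq assms by simp
  have dm: "(u*d+w) div d = u" "(u*d+w) mod d = w" using divmod_dec assms by auto
  show ?thesis unfolding H1_def affine_def W1_def b1_def
    using n assms by (simp add: dm distrib_right sum.distrib sum_delta_mult join_input_def field_simps)
qed

lemma h1_XP:
  assumes "k < d"
  shows "H1 \<delta> d p (join_input d x r) (d*d+d*d+k) = relu (x k)"
  unfolding H1_def affine_def W1_def b1_def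
  using assms by (simp add: sum_delta_mult join_input_def)

lemma h1_XN:
  assumes "k < d"
  shows "H1 \<delta> d p (join_input d x r) (d*d+d*d+d+k) = relu (- x k)"
  unfolding H1_def affine_def W1_def b1_def
  using assms by (simp add: sum_delta_mult join_input_def)

lemma h1_RP:
  assumes "i < p"
  shows "H1 \<delta> d p (join_input d x r) (d*d+d*d+d+d+i) = relu (r i)"
  unfolding H1_def affine_def W1_def b1_def
  using assms by (simp add: sum_delta_mult join_input_def)

lemma h1_RN:
  assumes "i < p"
  shows "H1 \<delta> d p (join_input d x r) (d*d+d*d+d+d+p+i) = relu (- r i)"
  unfolding H1_def affine_def W1_def b1_def
  using assms by (simp add: sum_delta_mult join_input_def)


definition W2 :: "nat \<Rightarrow> nat \<Rightarrow> nat \<Rightarrow> nat \<Rightarrow> real" where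
  "W2 d p n j =
    (let q = n mod 4; i = n div 4 div d; k = n div 4 mod d in
     if j < d*d then (if j div d = k then -1 else 0)
     else if j < d*d+d*d then (if (j-d*d) div d = k then 1 else 0)
     else if j < d*d+d*d+d then (if j - (d*d+d*d) = k \<and> q < 2 then 1 else 0)
     else if j < d*d+d*d+d+d then (if j - (d*d+d*d+d) = k \<and> q < 2 then -1 else 0)
     else if j < d*d+d*d+d+d+p then (if j - (d*d+d*d+d+d) = i then 1 else 0)
     else (if j - (d*d+d*d+d+d+p) = i then -1 else 0))"

definition b2 :: "nat \<Rightarrow> real" where
  "b2 n = (if n mod 4 = 0 \<or> n mod 4 = 2 then 0 else -1)"

definition N1 :: "nat \<Rightarrow> nat \<Rightarrow> nat" where
  "N1 d p = d*d + (d*d + (d + (d + (p + p))))"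

lemma pre2_val:
  assumes d: "d > 0" and i: "n div 4 div d < p"
  defines "q \<equiv> n mod 4" and "ii \<equiv> n div 4 div d" and "k \<equiv> n div 4 mod d"
  shows "affine (N1 d p) (W2 d p, b2) h n =
     - (\<Sum>v<d. h (k*d+v)) + (\<Sum>v<d. h (d*d+(k*d+v)))
     + (if q < 2 then h (d*d+d*d+k) - h (d*d+d*d+d+k) else 0)
     + h (d*d+d*d+d+d+ii) - h (d*d+d*d+d+d+p+ii) + (if q = 0 \<or> q = 2 then 0 else -1)"
proof -
  have kd: "k < d" using d k_def by simp
  have ip: "ii < p" using i ii_def by simp
  let ?f = "\<lambda>j. W2 d p n j * h j"
  have bA: "(\<Sum>j<d*d. ?f j) = - (\<Sum>v<d. h (k*d+v))"
  proof -
    have "(\<Sum>j<d*d. ?f j) = (\<Sum>u<d. \<Sum>v<d. ?f (u*d+v))" by (rule sum_pair)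
    also have "\<dots> = (\<Sum>u<d. if u = k then - (\<Sum>v<d. h (k*d+v)) else 0)"
    proof (rule sum.cong)
      fix u assume u: "u \<in> {..<d}"
      have "?f (u*d+v) = (if u = k then - h (u*d+v) else 0)" if v: "v < d" for v
        using lt_sq[of u d v] divmod_dec[OF v, of u] u v unfolding W2_def Let_def k_def by auto
      then show "(\<Sum>v<d. ?f (u*d+v)) = (if u = k then - (\<Sum>v<d. h (k*d+v)) else 0)"
        by (simp add: sum_negf)
    qed simp
    also have "\<dots> = - (\<Sum>v<d. h (k*d+v))" using kd by simp
    finally show ?thesis .
  qed
  have bB: "(\<Sum>j<d*d. ?f (d*d+j)) = (\<Sum>v<d. h (d*d+(k*d+v)))"
  proof -
    have "(\<Sum>j<d*d. ?f (d*d+j)) = (\<Sum>u<d. \<Sum>v<d. ?f (d*d+(u*d+v)))" by (rule sum_pair)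
    also have "\<dots> = (\<Sum>u<d. if u = k then (\<Sum>v<d. h (d*d+(k*d+v))) else 0)"
    proof (rule sum.cong)
      fix u assume u: "u \<in> {..<d}"
      have "?f (d*d+(u*d+v)) = (if u = k then h (d*d+(u*d+v)) else 0)" if v: "v < d" for v
        using lt_sq[of u d v] divmod_dec[OF v, of u] u v unfolding W2_def Let_def k_def by auto
      then show "(\<Sum>v<d. ?f (d*d+(u*d+v))) = (if u = k then (\<Sum>v<d. h (d*d+(k*d+v))) else 0)"
        by simp
    qed simp
    also have "\<dots> = (\<Sum>v<d. h (d*d+(k*d+v)))" using kd by simp
    finally show ?thesis .
  qed
  have bXP: "(\<Sum>j<d. ?f (d*d+(d*d+j))) = (if q < 2 then h (d*d+d*d+k) else 0)"
  proof -
    have "(\<Sum>j<d. ?f (d*d+(d*d+j))) = (\<Sum>j<d. if j = k then (if q < 2 then h (d*d+d*d+k) else 0) else 0)"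
      by (rule sum.cong) (auto simp: W2_def Let_def k_def q_def add.assoc)
    then show ?thesis using kd by simp
  qed
  have bXN: "(\<Sum>j<d. ?f (d*d+(d*d+(d+j)))) = (if q < 2 then - h (d*d+d*d+d+k) else 0)"
  proof -
    have "(\<Sum>j<d. ?f (d*d+(d*d+(d+j)))) = (\<Sum>j<d. if j = k then (if q < 2 then - h (d*d+d*d+d+k) else 0) else 0)"
      by (rule sum.cong) (auto simp: W2_def Let_def k_def q_def add.assoc)
    then show ?thesis using kd by simp
  qed
  have bRP: "(\<Sum>j<p. ?f (d*d+(d*d+(d+(d+j))))) = h (d*d+d*d+d+d+ii)"
  proof -
    have "(\<Sum>j<p. ?f (d*d+(d*d+(d+(d+j))))) = (\<Sum>j<p. if j = ii then h (d*d+d*d+d+d+ii) else 0)"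
      by (rule sum.cong) (auto simp: W2_def Let_def ii_def add.assoc)
    then show ?thesis using ip by simp
  qed
  have bRN: "(\<Sum>j<p. ?f (d*d+(d*d+(d+(d+(p+j)))))) = - h (d*d+d*d+d+d+p+ii)"
  proof -
    have "(\<Sum>j<p. ?f (d*d+(d*d+(d+(d+(p+j)))))) = (\<Sum>j<p. if j = ii then - h (d*d+d*d+d+d+p+ii) else 0)"
      by (rule sum.cong) (auto simp: W2_def Let_def ii_def add.assoc)
    then show ?thesis using ip by simp
  qed
  have "(\<Sum>j<N1 d p. ?f j) = (\<Sum>j<d*d. ?f j) + (\<Sum>j<d*d. ?f (d*d+j)) + (\<Sum>j<d. ?f (d*d+(d*d+j)))
     + (\<Sum>j<d. ?f (d*d+(d*d+(d+j)))) + (\<Sum>j<p. ?f (d*d+(d*d+(d+(d+j)))))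
     + (\<Sum>j<p. ?f (d*d+(d*d+(d+(d+(p+j))))))"
    unfolding N1_def sum_split by (simp add: add.assoc)
  then show ?thesis unfolding affine_def
    using bA bB bXP bXN bRP bRN by (simp add: b2_def q_def)
qed


definition W3 :: "nat \<Rightarrow> nat \<Rightarrow> nat \<Rightarrow> nat \<Rightarrow> real" where
  "W3 d p i n = (if n div 4 div d = i then (if n mod 4 = 0 \<or> n mod 4 = 3 then 1 else -1) else 0)"

lemma sum4: "(\<Sum>q<4::nat. g q) = g 0 + g 1 + g 2 + (g 3::real)"
  by (simp add: eval_nat_numeral)

lemma blk4: "(\<Sum>q<4. W3 d p i (m*4+q) * h (m*4+q)) =
   (if m div d = i then h (m*4) - h (m*4+1) - h (m*4+2) + h (m*4+3) else 0)"
proof -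
  have Wq: "W3 d p i (m*4+q) = (if m div d = i then (if q=0 \<or> q=3 then 1 else -1) else 0)" if "q < 4" for q
    unfolding W3_def using divmod_dec[OF that, of m] by simp
  have "(\<Sum>q<4. W3 d p i (m*4+q) * h (m*4+q)) =
     (\<Sum>q<4. (if m div d = i then (if q=0 \<or> q=3 then 1 else -1) else 0) * h (m*4+q))"
    by (rule sum.cong) (simp_all add: Wq)
  then show ?thesis by (simp add: sum4)
qed

lemma out_val:
  assumes "i < p" "d > 0"
  shows "affine (p*d*4) (W3 d p, \<lambda>_. 0) h i =
    (\<Sum>k<d. h ((i*d+k)*4) - h ((i*d+k)*4+1) - h ((i*d+k)*4+2) + h ((i*d+k)*4+3))"
proof -
  let ?f = "\<lambda>n. W3 d p i n * h n"
  have "(\<Sum>n<p*d*4. ?f n) = (\<Sum>m<p*d. \<Sum>q<4. ?f (m*4+q))" by (rule sum_pair)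
  also have "\<dots> = (\<Sum>a<p. \<Sum>k<d. \<Sum>q<4. ?f ((a*d+k)*4+q))" by (rule sum_pair)
  also have "\<dots> = (\<Sum>a<p. if a = i then (\<Sum>k<d. h ((i*d+k)*4) - h ((i*d+k)*4+1) - h ((i*d+k)*4+2) + h ((i*d+k)*4+3)) else 0)"
  proof (rule sum.cong)
    fix a assume a: "a \<in> {..<p}"
    have "(\<Sum>q<4. ?f ((a*d+k)*4+q)) = (if a = i then h ((i*d+k)*4) - h ((i*d+k)*4+1) - h ((i*d+k)*4+2) + h ((i*d+k)*4+3) else 0)"
      if k: "k < d" for k
      using blk4[where m="a*d+k" and d=d and p=p and i=i and h=h] divmod_dec(1)[OF k, of a] by (cases "a = i") simp_all
    then show "(\<Sum>k<d. \<Sum>q<4. ?f ((a*d+k)*4+q)) = (if a = i then (\<Sum>k<d. h ((i*d+k)*4) - h ((i*d+k)*4+1) - h ((i*d+k)*4+2) + h ((i*d+k)*4+3)) else 0)"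
      by simp
  qed simp
  also have "\<dots> = (\<Sum>k<d. h ((i*d+k)*4) - h ((i*d+k)*4+1) - h ((i*d+k)*4+2) + h ((i*d+k)*4+3))"
    using assms by simp
  finally show ?thesis unfolding affine_def by simp
qed


lemma pre2_q:
  assumes "\<delta> > 0" "d > 0" "i < p" "k < d" "q < 4"
  shows "affine (N1 d p) (W2 d p, b2) (H1 \<delta> d p (join_input d x r)) ((i*d+k)*4+q) =
     - (\<Sum>v<d. relu ((1/\<delta>) * (x k - x v))) + (\<Sum>v<d. relu ((1/\<delta>) * (x k - x v - \<delta>)))
     + (if q < 2 then x k else 0) + r i + (if q = 0 \<or> q = 2 then -1 else -2)"
proof -
  let ?h = "H1 \<delta> d p (join_input d x r)"
  let ?n = "(i*d+k)*4+q"
  have e1: "?n div 4 = i*d+k" "?n mod 4 = q" using divmod_dec[OF assms(5), where u="i*d+k"] by auto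
  have e2: "(i*d+k) div d = i" "(i*d+k) mod d = k" using divmod_dec[OF assms(4), where u="i"] by auto
  have P: "affine (N1 d p) (W2 d p, b2) ?h ?n =
     - (\<Sum>v<d. ?h (k*d+v)) + (\<Sum>v<d. ?h (d*d+(k*d+v)))
     + (if q < 2 then ?h (d*d+d*d+k) - ?h (d*d+d*d+d+k) else 0)
     + ?h (d*d+d*d+d+d+i) - ?h (d*d+d*d+d+d+p+i) + (if q = 0 \<or> q = 2 then 0 else -1)"
    using pre2_val[of d ?n p ?h] assms(2,3) unfolding e1 e2 by simp
  have SA: "(\<Sum>v<d. ?h (k*d+v)) = (\<Sum>v<d. relu ((1/\<delta>) * (x k - x v))) + 1"
  proof -
    have "(\<Sum>v<d. ?h (k*d+v)) = (\<Sum>v<d. relu ((1/\<delta>) * (x k - x v)) + (if k = v then 1 else 0))"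
      using h1_A[OF assms(1) assms(4)] by (intro sum.cong) auto
    then show ?thesis using assms(4) by (simp add: sum.distrib)
  qed
  have SB: "(\<Sum>v<d. ?h (d*d+(k*d+v))) = (\<Sum>v<d. relu ((1/\<delta>) * (x k - x v - \<delta>)))"
    using h1_B[OF assms(1) assms(4)] by (intro sum.cong) auto
  show ?thesis unfolding P SA SB h1_XP[OF assms(4)] h1_XN[OF assms(4)] h1_RP[OF assms(3)] h1_RN[OF assms(3)]
    using relu_diff[of "x k"] relu_diff[of "r i"] by simp
qed

lemma net_correct:
  assumes "\<delta> > 0" "d > 0" "i < p"
  shows "affine (p*d*4) (W3 d p, \<lambda>_. 0)
     (\<lambda>n. relu (affine (N1 d p) (W2 d p, b2) (H1 \<delta> d p (join_input d x r)) n)) i = NRS \<delta> d x r i"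
  unfolding out_val[OF assms(3,2)] NRS_def
proof (rule sum.cong)
  fix k assume k: "k \<in> {..<d}"
  let ?A = "\<Sum>v<d. relu ((1/\<delta>) * (x k - x v))"
  let ?B = "\<Sum>v<d. relu ((1/\<delta>) * (x k - x v - \<delta>))"
  have y: "RS_y \<delta> d x k = 1 + ?A - ?B" unfolding RS_y_def NC_def by (simp add: sum_subtractf)
  have kd: "k < d" using k by simp
  let ?P = "\<lambda>n. affine (N1 d p) (W2 d p, b2) (H1 \<delta> d p (join_input d x r)) n"
  have P0: "?P ((i*d+k)*4) = - ?A + ?B + x k + r i - 1"
    using pre2_q[OF assms(1,2,3) kd, of 0 x r] by simp
  have P1: "?P ((i*d+k)*4+1) = - ?A + ?B + x k + r i - 2"
    using pre2_q[OF assms(1,2,3) kd, of 1 x r] by simp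
  have P2: "?P ((i*d+k)*4+2) = - ?A + ?B + r i - 1"
    using pre2_q[OF assms(1,2,3) kd, of 2 x r] by simp
  have P3: "?P ((i*d+k)*4+3) = - ?A + ?B + r i - 2"
    using pre2_q[OF assms(1,2,3) kd, of 3 x r] by simp
  have a0: "- ?A + ?B + x k + r i - 1 = x k + (r i - RS_y \<delta> d x k)" unfolding y by linarith
  have a1: "- ?A + ?B + x k + r i - 2 = x k + (r i - RS_y \<delta> d x k) - 1" unfolding y by linarith
  have a2: "- ?A + ?B + r i - 1 = r i - RS_y \<delta> d x k" unfolding y by linarith
  have a3: "- ?A + ?B + r i - 2 = r i - RS_y \<delta> d x k - 1" unfolding y by linarith
  show "relu (?P ((i*d+k)*4)) - relu (?P ((i*d+k)*4+1)) - relu (?P ((i*d+k)*4+2)) + relu (?P ((i*d+k)*4+3)) =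
        NIFP (x k) (r i - RS_y \<delta> d x k)"
    unfolding P0 P1 P2 P3 a0 a1 a2 a3 NIFP_def ..
qed simp


lemma pair_bd: "(c::real) \<ge> 0 \<Longrightarrow> \<bar>(if j = a then c else 0) + (if j = b then -c else 0)\<bar> \<le> c"
  by (cases "j = a"; cases "j = b") auto
lemma if_bd: "(\<bar>x\<bar> \<le> B) \<Longrightarrow> (\<bar>y\<bar> \<le> B) \<Longrightarrow> \<bar>if P then x else (y::real)\<bar> \<le> B"
  by simp
lemma W1_bd: "\<delta> > 0 \<Longrightarrow> \<bar>W1 \<delta> d p n j\<bar> \<le> max 1 (1/\<delta>)"
proof -
  assume "\<delta> > 0"
  then have c: "\<bar>(if j = a then 1/\<delta> else 0) + (if j = b then -1/\<delta> else 0)\<bar> \<le> max 1 (1/\<delta>)" for a b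
    using pair_bd[of "1/\<delta>" j a b] by (simp add: le_max_iff_disj)
  have e: "\<bar>(if P then v else 0)\<bar> \<le> max 1 (1/\<delta>)" if "\<bar>v\<bar> \<le> 1" for P and v::real
    using that by (simp add: le_max_iff_disj)
  show ?thesis unfolding W1_def
    by (intro if_bd c e) simp_all
qed
lemma W2_bd: "\<bar>W2 d p n j\<bar> \<le> max 1 (1/\<delta>)"
proof -
  have e: "\<bar>(if P then v else 0)\<bar> \<le> max 1 (1/\<delta>)" if "\<bar>v\<bar> \<le> 1" for P and v::real
    using that by (simp add: le_max_iff_disj)
  show ?thesis unfolding W2_def Let_def
    by (intro if_bd e) simp_all
qed
lemma W3_bd: "\<bar>W3 d p n j\<bar> \<le> max 1 (1/\<delta>)"
  unfolding W3_def by (simp add: le_max_iff_disj)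
lemma b1_bd: "\<bar>b1 d n\<bar> \<le> max 1 (1/\<delta>)"
  unfolding b1_def by (simp add: le_max_iff_disj)
lemma b2_bd: "\<bar>b2 n\<bar> \<le> max 1 (1/\<delta>)"
  unfolding b2_def by (simp add: le_max_iff_disj)
theorem lemmaG13:
  fixes \<delta> :: real and d p :: nat
  assumes "\<delta> > 0" and "d > 0" and "p > 0"
  shows
    "(\<forall>(x :: nat \<Rightarrow> real) (\<rho> :: nat \<Rightarrow> nat).
        (\<forall>k<d. 0 \<le> x k \<and> x k \<le> 1)
      \<and> (\<forall>j<d. \<forall>k<d. j \<noteq> k \<longrightarrow> \<bar>x j - x k\<bar> \<ge> \<delta> \<or> (x j = 0 \<and> x k = 0))
      \<and> (\<forall>i<p. 1 \<le> \<rho> i \<and> \<rho> i \<le> d)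
      \<longrightarrow> (\<forall>i<p. NRS \<delta> d x (\<lambda>i. real (\<rho> i)) i = rank_entry d x (\<rho> i)))
   \<and> (\<forall>(x :: nat \<Rightarrow> real) (r :: nat \<Rightarrow> real). \<forall>i<p.
        \<bar>NRS \<delta> d x r i\<bar> \<le> real d * sup_norm d x)
   \<and> (\<exists>dims Ls. nn_wf dims Ls \<and> hd dims = d + p \<and> last dims = p
        \<and> nn_hidden_layers Ls = 2
        \<and> nn_width dims \<le> max (2 * d^2 + 2 * d + 2 * p) (4 * p * d)
        \<and> nn_weight_bound dims Ls (max 1 (1 / \<delta>))
        \<and> (\<forall>(x :: nat \<Rightarrow> real) (r :: nat \<Rightarrow> real). \<forall>i<p.
              nn_eval dims Ls (join_input d x r) i = NRS \<delta> d x r i))"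
  proof -
  have B1: "1 \<le> max 1 (1/\<delta>)" by auto
  note W1b = W1_bd[OF assms(1)] and b1b = b1_bd and W2b = W2_bd and b2b = b2_bd and W3b = W3_bd
  define dims where "dims = [d+p, N1 d p, p*d*4, p]"
  define Ls where "Ls = [(W1 \<delta> d p, b1 d), (W2 d p, b2), (W3 d p, (\<lambda>_. 0::real))]"
  have wf: "nn_wf dims Ls" unfolding nn_wf_def dims_def Ls_def by simp
  have hl: "nn_hidden_layers Ls = 2" unfolding nn_hidden_layers_def Ls_def by simp
  have N1e: "N1 d p = 2 * d^2 + 2 * d + 2 * p" unfolding N1_def by (simp add: power2_eq_square)
  have wd: "nn_width dims \<le> max (2 * d^2 + 2 * d + 2 * p) (4 * p * d)"
    unfolding nn_width_def dims_def N1e by (simp add: ac_simps)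
  have wb: "nn_weight_bound dims Ls (max 1 (1 / \<delta>))"
    unfolding nn_weight_bound_def
  proof (intro allI impI conjI)
    fix l i j assume l: "l < length Ls"
    then have "l = 0 \<or> l = 1 \<or> l = 2" unfolding Ls_def by auto
    then show "\<bar>snd (Ls ! l) i\<bar> \<le> max 1 (1/\<delta>)"
      using b1b b2b B1 unfolding Ls_def by auto
    show "\<bar>fst (Ls ! l) i j\<bar> \<le> max 1 (1/\<delta>)"
      using \<open>l = 0 \<or> l = 1 \<or> l = 2\<close> W1b W2b W3b unfolding Ls_def by auto
  qed
  have ev: "nn_eval dims Ls (join_input d x r) i = NRS \<delta> d x r i" if "i < p" for x r i
  proof -
    have "nn_eval dims Ls (join_input d x r) i = affine (p*d*4) (W3 d p, \<lambda>_. 0)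
     (\<lambda>n. relu (affine (N1 d p) (W2 d p, b2) (H1 \<delta> d p (join_input d x r)) n)) i"
      unfolding dims_def Ls_def H1_def by simp
    then show ?thesis using net_correct[OF assms(1,2) that] by simp
  qed
  have P3: "\<exists>dims Ls. nn_wf dims Ls \<and> hd dims = d + p \<and> last dims = p
        \<and> nn_hidden_layers Ls = 2
        \<and> nn_width dims \<le> max (2 * d^2 + 2 * d + 2 * p) (4 * p * d)
        \<and> nn_weight_bound dims Ls (max 1 (1 / \<delta>))
        \<and> (\<forall>(x :: nat \<Rightarrow> real) (r :: nat \<Rightarrow> real). \<forall>i<p.
              nn_eval dims Ls (join_input d x r) i = NRS \<delta> d x r i)"
    by (rule exI[of _ dims], rule exI[of _ Ls]) (use wf hl wd wb ev in \<open>simp add: dims_def\<close>)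
  show ?thesis
    using P3 part1[OF assms(1)] part2[OF assms(2)] by blast
qed

end
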